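(* Let $\Sigma=\{0,1\}$ and $D=\Sigma(\Sigma\Sigma)^*\setminus\left(\Sigma^*11\Sigma^*\cup000\Sigma^*\cup101\Sigma^*\right)$. A map $f:\mathbb{Z}\to D$ is an increasing bijection from $(\mathbb{Z},<)$ to $(D,\prec)$ with $f(0)=0$ (the one-letter word) if and only if $f=\mathrm{rep}_{\mathcal{F}c}$.
   Context: Fibonacci numbers: $F_0=1$, $F_1=2$, $F_n=F_{n-1}+F_{n-2}$ for $n\ge2$. For a nonempty binary word $w=w_{k-1}\cdots w_0$ (digits indexed from the right), $\mathrm{val}_{\mathcal{F}c}(w)=\sum_{i=0}^{k-1}w_iF_i-w_{k-1}F_k$. $\mathrm{rep}_{\mathcal{F}c}(n)$ denotes the unique $w\in D$ with $\mathrm{val}_{\mathcal{F}c}(w)=n$ (this restriction of $\mathrm{val}_{\mathcal{F}c}$ to $D$ is a bijection onto $\mathbb Z$). Order: $u<_{rad}v$ iff $|u|<|v|$, or $|u|=|v|$ and $u<_{lex}v$; $u<_{rev}v$ iff $|u|>|v|$, or $|u|=|v|$ and $u<_{lex}v$. The total order $\prec$ on $\Sigma^*$: $u\prec v$ iff either $u\in1\Sigma^*$ and $v\in0\Sigma^*$; or $u,v\in0\Sigma^*$ and $u<_{rad}v$; or $u,v\in1\Sigma^*$ and $u<_{rev}v$. *)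

theory Defs
  imports Main
begin

text \<open>Words over the alphabet Sigma = {0,1} are lists of naturals with letters in {0,1};
  the list is written left to right, so a word w = w_(k-1) ... w_0 is the list
  [w_(k-1), ..., w_0], i.e. w_i = w ! (length w - 1 - i).\<close>

definition Sigma_words :: "nat list set" where
  "Sigma_words = {w. set w \<subseteq> {0, 1}}"

fun Fib :: "nat \<Rightarrow> int" where
  "Fib 0 = 1"
| "Fib (Suc 0) = 2"
| "Fib (Suc (Suc n)) = Fib (Suc n) + Fib n"

definition digit :: "nat list \<Rightarrow> nat \<Rightarrow> nat" where
  "digit w i = w ! (length w - 1 - i)"

definition val_Fc :: "nat list \<Rightarrow> int" where
  "val_Fc w = (\<Sum>i<length w. int (digit w i) * Fib i) - int (digit w (length w - 1)) * Fib (length w)"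

definition is_factor :: "nat list \<Rightarrow> nat list \<Rightarrow> bool" where
  "is_factor u w \<longleftrightarrow> (\<exists>p s. w = p @ u @ s)"

definition D :: "nat list set" where
  "D = {w \<in> Sigma_words. odd (length w) \<and> \<not> is_factor [1,1] w
          \<and> \<not> (\<exists>s. w = [0,0,0] @ s) \<and> \<not> (\<exists>s. w = [1,0,1] @ s)}"

definition rep_Fc :: "int \<Rightarrow> nat list" where
  "rep_Fc n = (THE w. w \<in> D \<and> val_Fc w = n)"

definition lex_less :: "nat list \<Rightarrow> nat list \<Rightarrow> bool" where
  "lex_less u v \<longleftrightarrow> (\<exists>p a b s t. u = p @ a # s \<and> v = p @ b # t \<and> a < b)
      \<or> (\<exists>s. s \<noteq> [] \<and> v = u @ s)"

definition rad_less :: "nat list \<Rightarrow> nat list \<Rightarrow> bool" where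
  "rad_less u v \<longleftrightarrow> length u < length v \<or> (length u = length v \<and> lex_less u v)"

definition rev_less :: "nat list \<Rightarrow> nat list \<Rightarrow> bool" where
  "rev_less u v \<longleftrightarrow> length u > length v \<or> (length u = length v \<and> lex_less u v)"

definition prec :: "nat list \<Rightarrow> nat list \<Rightarrow> bool" where
  "prec u v \<longleftrightarrow>
     (u \<noteq> [] \<and> hd u = 1 \<and> v \<noteq> [] \<and> hd v = 0)
   \<or> (u \<noteq> [] \<and> hd u = 0 \<and> v \<noteq> [] \<and> hd v = 0 \<and> rad_less u v)
   \<or> (u \<noteq> [] \<and> hd u = 1 \<and> v \<noteq> [] \<and> hd v = 1 \<and> rev_less u v)"

end

theory Submission
  imports Defs
begin
fun zv :: "nat list \<Rightarrow> int" where
  "zv [] = 0" | "zv (a#t) = int a * Fib (length t) + zv t"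
fun no11 :: "nat list \<Rightarrow> bool" where
  "no11 (a#b#t) = (\<not>(a=1 \<and> b=1) \<and> no11 (b#t))" | "no11 _ = True"
definition bits :: "nat list \<Rightarrow> bool" where "bits w = (set w \<subseteq> {0,1})"

lemma Fib_pos: "Fib n > 0" by (induction n rule: Fib.induct) auto
lemma Fib_Suc: "Fib n < Fib (Suc n)" by (induction n rule: Fib.induct) (auto simp: Fib_pos)
lemma Fib_mono: "m \<le> n \<Longrightarrow> Fib m \<le> Fib n"
  by (induction n) (auto simp: le_Suc_eq intro: order_trans[OF _ less_imp_le[OF Fib_Suc]])
lemma Fib_ge: "Fib n \<ge> int n + 1" by (induction n rule: Fib.induct) (auto simp: Fib_pos)

lemma sum_zv: "(\<Sum>i<length w. int (digit w i) * Fib i) = zv w"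
proof (induction w)
  case Nil then show ?case by simp
next
  case (Cons a t)
  have "(\<Sum>i<length (a#t). int (digit (a#t) i) * Fib i) = (\<Sum>i<length t. int (digit (a#t) i) * Fib i) + int a * Fib (length t)"
    by (simp add: digit_def)
  also have "(\<Sum>i<length t. int (digit (a#t) i) * Fib i) = (\<Sum>i<length t. int (digit t i) * Fib i)"
    by (rule sum.cong) (auto simp: digit_def nth_Cons split: nat.split, metis Suc_diff_Suc diff_Suc_1 nat.inject)
  finally show ?case using Cons by simp
qed

lemma val_zv: "w \<noteq> [] \<Longrightarrow> val_Fc w = zv w - int (hd w) * Fib (length w)"
proof -
  assume "w \<noteq> []"
  then have "digit w (length w - 1) = hd w" by (cases w) (auto simp: digit_def)
  then show ?thesis unfolding val_Fc_def sum_zv by simp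
qed

lemma is_factor_cons: "is_factor u (a#w) \<longleftrightarrow> (\<exists>s. a#w = u@s) \<or> is_factor u w"
  unfolding is_factor_def
  apply (rule iffI)
   apply (auto simp: Cons_eq_append_conv)[1]
  apply (metis append_Cons append_Nil)
  done

lemma no11_iff: "\<not> is_factor [1,1] w \<longleftrightarrow> no11 w"
proof (induction w rule: no11.induct)
  case (1 a b t) then show ?case by (subst is_factor_cons) auto
next
  case "2_1" then show ?case by (auto simp: is_factor_def)
next
  case ("2_2" a) then show ?case by (auto simp: is_factor_def Cons_eq_append_conv)
qed
lemma no11_0: "no11 (0#t) = no11 t" by (cases t) auto
lemma no11_tl: "no11 (a#t) \<Longrightarrow> no11 t" by (cases t) auto
lemma bits_cons[simp]: "bits (a#t) = ((a = 0 \<or> a = 1) \<and> bits t)" by (auto simp: bits_def)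
lemma bits_nil[simp]: "bits []" by (auto simp: bits_def)

lemma zv_bound: "bits t \<Longrightarrow> no11 t \<Longrightarrow> 0 \<le> zv t \<and> zv t < Fib (length t)"
proof (induction "length t" arbitrary: t rule: less_induct)
  case less
  show ?case
  proof (cases t)
    case Nil then show ?thesis by simp
  next
    case (Cons a t1)
    show ?thesis
    proof (cases "a = 0")
      case True
      have "0 \<le> zv t1 \<and> zv t1 < Fib (length t1)" using less Cons by (auto intro!: less.hyps dest: no11_tl)
      then show ?thesis using Cons True Fib_Suc[of "length t1"] by simp
    next
      case False
      then have a1: "a = 1" using less Cons by auto
      show ?thesis
      proof (cases t1)
        case Nil then show ?thesis using Cons a1 by simp
      next
        case (Cons b t2)
        then have b0: "b = 0" using less \<open>t = a#t1\<close> a1 by auto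
        have "0 \<le> zv t2 \<and> zv t2 < Fib (length t2)" using less Cons \<open>t = a#t1\<close> by (auto intro!: less.hyps dest: no11_tl)
        then show ?thesis using Cons \<open>t = a#t1\<close> a1 b0 Fib_pos[of "Suc (length t2)"] by simp
      qed
    qed
  qed
qed

lemma zv_surj: "0 \<le> n \<Longrightarrow> n < Fib k \<Longrightarrow> \<exists>t. length t = k \<and> bits t \<and> no11 t \<and> zv t = n"
proof (induction k arbitrary: n rule: Fib.induct)
  case 1 then show ?case by (intro exI[of _ "[]"]) auto
next
  case 2
  then have "n = 0 \<or> n = 1" by auto
  then show ?case
  proof
    assume "n = 0" then show ?thesis by (intro exI[of _ "[0]"]) auto
  next
    assume "n = 1" then show ?thesis by (intro exI[of _ "[1]"]) auto
  qed
next
  case (3 m)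
  show ?case
  proof (cases "n < Fib (Suc m)")
    case True
    then obtain t where "length t = Suc m \<and> bits t \<and> no11 t \<and> zv t = n" using 3 by blast
    then show ?thesis by (intro exI[of _ "0#t"]) (auto simp: no11_0)
  next
    case False
    then have "\<exists>t. length t = m \<and> bits t \<and> no11 t \<and> zv t = n - Fib (Suc m)" using 3 by (intro 3(2)) auto
    then obtain t where "length t = m \<and> bits t \<and> no11 t \<and> zv t = n - Fib (Suc m)" by blast
    then show ?thesis by (intro exI[of _ "1#0#t"]) (auto simp: no11_0)
  qed
qed

lemma lex_nil1[simp]: "lex_less [] v \<longleftrightarrow> v \<noteq> []" by (auto simp: lex_less_def)
lemma lex_nil2[simp]: "\<not> lex_less u []" by (auto simp: lex_less_def)
lemma lex_cons[simp]: "lex_less (a#x) (b#y) \<longleftrightarrow> a < b \<or> (a = b \<and> lex_less x y)"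
  unfolding lex_less_def
  apply (rule iffI)
   apply (auto simp: Cons_eq_append_conv)[1]
  apply (elim disjE conjE exE)
    apply (metis append_Nil)
   apply (metis append_Cons)
  apply (metis append_Cons)
  done

lemma lex_total: "length u = length v \<Longrightarrow> u \<noteq> v \<Longrightarrow> lex_less u v \<or> lex_less v u"
proof (induction u arbitrary: v)
  case (Cons a u)
  then obtain b v' where v: "v = b#v'" by (cases v) auto
  then show ?case using Cons by (cases "a = b") (auto simp: neq_iff)
qed simp

lemma zv_lex: "length u = length v \<Longrightarrow> bits u \<Longrightarrow> bits v \<Longrightarrow> no11 u \<Longrightarrow> no11 v \<Longrightarrow> lex_less u v \<Longrightarrow> zv u < zv v"
proof (induction u arbitrary: v)
  case Nil then show ?case by simp
next
  case (Cons a u)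
  then obtain b v' where v: "v = b#v'" by (cases v) auto
  show ?case
  proof (cases "a < b")
    case True
    then have "a = 0" "b = 1" using Cons v by auto
    moreover have "zv u < Fib (length u)" using zv_bound[of u] Cons by (auto dest: no11_tl)
    moreover have "0 \<le> zv v'" using zv_bound[of v'] Cons v by (auto dest: no11_tl)
    ultimately show ?thesis using v Cons by simp
  next
    case False
    then have "a = b" "lex_less u v'" using Cons v by auto
    then show ?thesis using Cons v by (auto dest: no11_tl)
  qed
qed
lemma D_iff: "w \<in> D \<longleftrightarrow> bits w \<and> no11 w \<and> odd (length w) \<and> \<not>(\<exists>s. w = 0#0#0#s) \<and> \<not>(\<exists>s. w = 1#0#1#s)"
  unfolding D_def Sigma_words_def bits_def no11_iff[symmetric] by auto

lemma D_facts: "w \<in> D \<Longrightarrow> w \<noteq> [] \<and> bits w \<and> no11 w \<and> odd (length w) \<and> (hd w = 0 \<or> hd w = 1)"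
  unfolding D_iff by (cases w) auto

lemma D0: assumes "w \<in> D" "hd w = 0"
  shows "0 \<le> val_Fc w \<and> (w = [0] \<or> (length w \<ge> 3 \<and> Fib (length w - 3) \<le> val_Fc w \<and> val_Fc w < Fib (length w - 1)))"
proof -
  obtain t where w: "w = 0#t" using assms D_facts[of w] by (cases w) auto
  have bt: "bits t" "no11 t" "even (length t)" using assms D_facts[of w] w by (auto simp: no11_0)
  have v: "val_Fc w = zv t" using val_zv[of w] w by simp
  have b: "0 \<le> zv t \<and> zv t < Fib (length t)" using zv_bound bt by blast
  show ?thesis
  proof (cases t)
    case Nil then show ?thesis using w v by simp
  next
    case (Cons a t1)
    then obtain b s where t: "t = a#b#s" using bt by (cases t1) auto
    have "\<not> (a = 0 \<and> b = 0)" using assms(1) w t unfolding D_iff by auto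
    moreover have "a = 0 \<or> a = 1" "b = 0 \<or> b = 1" "0 \<le> zv s" "\<not>(a = 1 \<and> b = 1)" using bt t zv_bound[of s] by (auto dest: no11_tl)
    ultimately have "Fib (length s) \<le> zv t" using t Fib_mono[of "length s" "Suc (length s)"] by auto
    then show ?thesis using w t v b by simp
  qed
qed

lemma D1: assumes "w \<in> D" "hd w = 1"
  shows "w = [1] \<and> val_Fc w = -1 \<or> (length w \<ge> 3 \<and> - Fib (length w - 2) \<le> val_Fc w \<and> val_Fc w \<le> Fib (length w - 3) - Fib (length w - 2) - 1)"
proof -
  obtain t where w: "w = 1#t" using assms D_facts[of w] by (cases w) auto
  have bt: "bits t" "no11 w" "even (length t)" using assms D_facts[of w] w by auto
  show ?thesis
  proof (cases t)
    case Nil then show ?thesis using w val_zv[of w] by simp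
  next
    case (Cons a t1)
    then obtain b s where t: "t = a#b#s" using bt by (cases t1) auto
    have "\<not> (a = 0 \<and> b = 1)" using assms(1) w t unfolding D_iff by auto
    moreover have "a = 0 \<or> a = 1" "b = 0 \<or> b = 1" using bt t by auto
    moreover have "a \<noteq> 1" using bt w t by auto
    ultimately have ab: "a = 0" "b = 0" by auto
    have s: "bits s" "no11 s" using bt t w ab by (auto simp: no11_0)
    have b: "0 \<le> zv s \<and> zv s < Fib (length s)" using zv_bound s by blast
    have "val_Fc w = zv s - Fib (Suc (length s))" using val_zv[of w] w t ab by simp
    then show ?thesis using w t b by simp
  qed
qed

lemma val0[simp]: "val_Fc [0] = 0" by (simp add: val_Fc_def digit_def)
lemma odd_gap: "odd (m::nat) \<Longrightarrow> odd n \<Longrightarrow> m < n \<Longrightarrow> m + 2 \<le> n" by presburger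

lemma prec_val: assumes u: "u \<in> D" and v: "v \<in> D" and p: "prec u v" shows "val_Fc u < val_Fc v"
proof -
  note fu = D_facts[OF u] and fv = D_facts[OF v]
  have samelex: "val_Fc u < val_Fc v" if "hd u = hd v" "length u = length v" "lex_less u v"
  proof -
    have "zv u < zv v" using zv_lex[of u v] that fu fv by auto
    then show ?thesis using val_zv[of u] val_zv[of v] fu fv that by simp
  qed
  consider (a) "hd u = 1" "hd v = 0" | (b) "hd u = 0" "hd v = 0" "rad_less u v"
    | (c) "hd u = 1" "hd v = 1" "rev_less u v"
    using p unfolding prec_def by auto
  then show ?thesis
  proof cases
    case a
    have "Fib (length u - 3) \<le> Fib (length u - 2)" by (rule Fib_mono) arith
    then have "val_Fc u < 0"
      using D1[OF u a(1)] by auto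
    then show ?thesis using D0[OF v a(2)] by linarith
  next
    case b
    show ?thesis
    proof (cases "length u < length v")
      case True
      then have g: "length u + 2 \<le> length v" using odd_gap fu fv by blast
      then have "v \<noteq> [0]" by auto
      then have "Fib (length v - 3) \<le> val_Fc v" using D0[OF v b(2)] by auto
      moreover have "Fib (length u - 1) \<le> Fib (length v - 3)" using g by (intro Fib_mono) auto
      moreover have "0 < Fib (length v - 3)" by (rule Fib_pos)
      ultimately show ?thesis using D0[OF u b(1)] by auto
    next
      case False
      then show ?thesis using b samelex unfolding rad_less_def by auto
    qed
  next
    case c
    show ?thesis
    proof (cases "length u > length v")
      case True
      then have g: "length v + 2 \<le> length u" using odd_gap fu fv by blast
      then have "u \<noteq> [1]" by auto
      then have uu: "val_Fc u \<le> Fib (length u - 3) - Fib (length u - 2) - 1" using D1[OF u c(1)] by auto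
      show ?thesis
      proof (cases "v = [1]")
        case True
        have "length u \<ge> 3" using g True by simp
        then obtain k where k: "length u = k + 3" by (metis le_add_diff_inverse2)
        have "Fib (length u - 3) < Fib (length u - 2)" using Fib_Suc[of k] k by (simp add: numeral_eq_Suc)
        then show ?thesis using uu D1[OF v c(2)] True by auto
      next
        case False
        then have vv: "- Fib (length v - 2) \<le> val_Fc v" "length v \<ge> 3" using D1[OF v c(2)] by auto
        have "length u \<ge> 4" using g vv by simp
        then obtain k where k: "length u = k + 4" by (metis le_add_diff_inverse2)
        have "Fib (length u - 2) = Fib (length u - 3) + Fib k" using k
          by (simp add: eval_nat_numeral)
        moreover have "Fib (length v - 2) \<le> Fib k" using k g by (intro Fib_mono) auto
        ultimately show ?thesis using uu vv by linarith
      qed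
    next
      case False
      then show ?thesis using c samelex unfolding rev_less_def by auto
    qed
  qed
qed

lemma prec_total: assumes u: "u \<in> D" and v: "v \<in> D" and ne: "u \<noteq> v" shows "prec u v \<or> prec v u"
proof -
  note fu = D_facts[OF u] and fv = D_facts[OF v]
  have lt: "lex_less u v \<or> lex_less v u" if "length u = length v" using lex_total[OF that ne] .
  show ?thesis using fu fv lt unfolding prec_def rad_less_def rev_less_def
    by (cases "length u" "length v" rule: linorder_cases) auto
qed
lemma pos_surj: "0 < N \<Longrightarrow> N < Fib (2*j) \<Longrightarrow> \<exists>w\<in>D. val_Fc w = N"
proof (induction j arbitrary: N)
  case 0 then show ?case by simp
next
  case (Suc j)
  show ?case
  proof (cases "N < Fib (2*j)")
    case True then show ?thesis using Suc by blast
  next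
    case False
    have "N < Fib (Suc (Suc (2*j)))" using Suc by simp
    then have "\<exists>t. length t = Suc (Suc (2*j)) \<and> bits t \<and> no11 t \<and> zv t = N"
      using Suc.prems by (intro zv_surj) auto
    then obtain t where t: "length t = Suc (Suc (2*j))" "bits t" "no11 t" "zv t = N" by blast
    then obtain a b s where s: "t = a#b#s" by (auto simp: length_Suc_conv)
    have "0 \<le> zv s \<and> zv s < Fib (length s)" using zv_bound[of s] t s by (auto dest: no11_tl)
    then have "\<not> (a = 0 \<and> b = 0)" using False t s by auto
    then have "0#t \<in> D" using t s unfolding D_iff by (auto simp: no11_0)
    moreover have "val_Fc (0#t) = N" using val_zv[of "0#t"] t by simp
    ultimately show ?thesis by blast
  qed
qed

lemma neg_surj: "1 \<le> N \<Longrightarrow> N \<le> Fib (2*j+1) \<Longrightarrow> \<exists>w\<in>D. val_Fc w = -N"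
proof (induction j arbitrary: N)
  case 0
  then have "N = 1 \<or> N = 2" by simp presburger
  then show ?case
  proof
    assume "N = 1"
    moreover have "[1] \<in> D" unfolding D_iff by simp
    moreover have "val_Fc [1] = -1" by (simp add: val_Fc_def digit_def)
    ultimately show ?thesis by blast
  next
    assume "N = 2"
    moreover have "[1,0,0] \<in> D" unfolding D_iff by simp
    moreover have "val_Fc [1,0,0] = -2" by (simp add: val_Fc_def digit_def eval_nat_numeral)
    ultimately show ?thesis by blast
  qed
next
  case (Suc j)
  show ?case
  proof (cases "N \<le> Fib (2*j+1)")
    case True then show ?thesis using Suc by blast
  next
    case False
    have e: "Fib (2*Suc j + 1) = Fib (Suc (Suc (2*j))) + Fib (2*j+1)" by simp
    have "Fib (2*Suc j+1) - N < Fib (Suc (Suc (2*j)))" "0 \<le> Fib (2*Suc j+1) - N"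
      using Suc False e by linarith+
    then obtain s where s: "length s = Suc (Suc (2*j))" "bits s" "no11 s" "zv s = Fib (2*Suc j+1) - N"
      using zv_surj by blast
    have "1#0#0#s \<in> D" using s unfolding D_iff by (auto simp: no11_0)
    moreover have "val_Fc (1#0#0#s) = -N" using val_zv[of "1#0#0#s"] s by simp
    ultimately show ?thesis by blast
  qed
qed

lemma val_surj: "\<exists>w\<in>D. val_Fc w = n"
proof -
  consider "n = 0" | "n > 0" | "n < 0" by linarith
  then show ?thesis
  proof cases
    case 1
    have "[0] \<in> D" unfolding D_iff by simp
    then show ?thesis using 1 by force
  next
    case 2
    have "n < Fib (2 * nat n)" using Fib_ge[of "2 * nat n"] 2 by linarith
    then show ?thesis using pos_surj 2 by blast
  next
    case 3
    have "-n \<le> Fib (2 * nat (-n) + 1)" using Fib_ge[of "2 * nat (-n) + 1"] 3 by linarith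
    then show ?thesis using neg_surj[of "-n"] 3 by force
  qed
qed

lemma val_inj: "u \<in> D \<Longrightarrow> v \<in> D \<Longrightarrow> val_Fc u = val_Fc v \<Longrightarrow> u = v"
  using prec_total prec_val by fastforce

lemma rep_props: "rep_Fc n \<in> D \<and> val_Fc (rep_Fc n) = n"
proof -
  have "\<exists>!w. w \<in> D \<and> val_Fc w = n" using val_surj val_inj by blast
  then show ?thesis unfolding rep_Fc_def by (rule theI')
qed

lemma rep_val: "w \<in> D \<Longrightarrow> rep_Fc (val_Fc w) = w"
  using rep_props val_inj by blast

lemma int_fix: fixes \<phi> :: "int \<Rightarrow> int"
  assumes mono: "\<And>x y. x < y \<Longrightarrow> \<phi> x < \<phi> y" and surj: "\<And>m. \<exists>n. \<phi> n = m" and z: "\<phi> 0 = 0"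
  shows "\<phi> n = n"
proof -
  have refl: "x < y" if "\<phi> x < \<phi> y" for x y
    using mono[of y x] that by (cases "x < y") (auto simp: not_less order.order_iff_strict)
  have step: "\<phi> (k+1) = \<phi> k + 1" for k
  proof (rule ccontr)
    assume "\<phi> (k+1) \<noteq> \<phi> k + 1"
    moreover have "\<phi> k < \<phi> (k+1)" using mono by simp
    ultimately have "\<phi> k < \<phi> k + 1" "\<phi> k + 1 < \<phi> (k+1)" by auto
    moreover obtain m where "\<phi> m = \<phi> k + 1" using surj by blast
    ultimately have "k < m" "m < k+1" using refl[of k m] refl[of m "k+1"] by auto
    then show False by linarith
  qed
  show ?thesis
  proof (induction n rule: int_induct[where k=0])
    case base then show ?case using z by simp
  next
    case (step1 i) then show ?case using step by simp
  next
    case (step2 i) then show ?case using step[of "i-1"] by simp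
  qed
qed
theorem mainTheorem3:
  fixes f :: "int \<Rightarrow> nat list"
  shows "(bij_betw f UNIV D \<and> (\<forall>x y. x < y \<longrightarrow> prec (f x) (f y)) \<and> f 0 = [0])
         \<longleftrightarrow> f = rep_Fc"
proof
  assume A: "bij_betw f UNIV D \<and> (\<forall>x y. x < y \<longrightarrow> prec (f x) (f y)) \<and> f 0 = [0]"
  have fD: "f x \<in> D" for x using A bij_betwE by blast
  have phi: "val_Fc (f n) = n" for n
  proof (rule int_fix[where \<phi>="\<lambda>n. val_Fc (f n)"])
    show "val_Fc (f x) < val_Fc (f y)" if "x < y" for x y using A that prec_val fD by blast
    show "\<exists>n. val_Fc (f n) = m" for m
    proof -
      have "rep_Fc m \<in> f ` UNIV" using A rep_props bij_betw_imp_surj_on by blast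
      then obtain n where "f n = rep_Fc m" by auto
      then show ?thesis using rep_props[of m] by metis
    qed
    show "val_Fc (f 0) = 0" using A by simp
  qed
  show "f = rep_Fc"
  proof
    fix n show "f n = rep_Fc n" using rep_val[OF fD[of n]] phi[of n] by simp
  qed
next
  assume f: "f = rep_Fc"
  have "inj rep_Fc" by (metis injI rep_props)
  moreover have "rep_Fc ` UNIV = D" using rep_props rep_val by (metis image_subsetI subsetI subset_antisym rangeI)
  ultimately have "bij_betw rep_Fc UNIV D" by (simp add: bij_betw_def)
  moreover have "prec (rep_Fc x) (rep_Fc y)" if "x < y" for x y
  proof -
    have "rep_Fc x \<noteq> rep_Fc y" using rep_props[of x] rep_props[of y] that by auto
    then have "prec (rep_Fc x) (rep_Fc y) \<or> prec (rep_Fc y) (rep_Fc x)" using prec_total rep_props by blast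
    moreover have "\<not> prec (rep_Fc y) (rep_Fc x)" using prec_val[of "rep_Fc y" "rep_Fc x"] rep_props[of x] rep_props[of y] that by auto
    ultimately show ?thesis by blast
  qed
  moreover have "rep_Fc 0 = [0]" using rep_val[of "[0]"] unfolding D_iff by simp
  ultimately show "bij_betw f UNIV D \<and> (\<forall>x y. x < y \<longrightarrow> prec (f x) (f y)) \<and> f 0 = [0]" using f by blast
qed
end
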